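(* Let $\Theta\sim U[0,1]$ and let $T^{2,1,3/2,\Theta}$ be the random policy with $T^{2,1,3/2,\Theta}_i=\mathcal{R}^{3/2}_{2,1,\Theta}(T_i^* )$ for $i\in[n]$. Then $T^{2,1,3/2,\Theta}$ is resource-feasible with probability 1 and $\mathbb{E}_\Theta[F(T^{2,1,3/2,\Theta})]\le\frac{5}{6\ln 2}\cdot\mathrm{OPT}(P)$.
   Context: An instance consists of integers $n\ge 1$, $D\ge 1$; a joint ordering cost $K_0>0$; for each commodity $i\in[n]$ an ordering cost $K_i>0$ and a holding coefficient $H_i>0$; and resource coefficients $\alpha_{id}\ge 0$. A policy is $T=(T_1,\dots,T_n)\in\mathbb{R}_{>0}^n$; it is resource-feasible if $\sum_{i}\alpha_{id}/T_i\le 1$ for every $d\in[D]$. For $g>0$, $\Delta\ge 0$, $\mathcal{M}_{g,\Delta}=\{0,g,\dots,\lfloor\Delta/g\rfloor g\}$; $N(T,\Delta)=|\bigcup_{i}\mathcal{M}_{T_i,\Delta}|$; $J(T)=K_0\limsup_{\Delta\to\infty}N(T,\Delta)/\Delta$; $F(T)=J(T)+\sum_i(K_i/T_i+H_iT_i)$. The convex relaxation (P) is: minimize $K_0/T_{\min}+\sum_{i\in[n]}(K_i/T_i+H_iT_i)$ over $(T_{\min},T_1,\dots,T_n)$ subject to $T_i\ge T_{\min}\ge0$ for all $i$ and $\sum_i\alpha_{id}/T_i\le1$ for all $d$. $\mathrm{OPT}(P)$ is its optimal value and $T^*=(T^*_{\min},T^*_1,\dots,T^*_n)$ is a fixed optimal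 solution (with $T^*_{\min}>0$). For $\theta\in[0,1]$: $\mathcal{H}^{3/2}_{2,1,\theta}=\{2^{p+\theta}T^*_{\min}:p\in\mathbb{Z}\}\cup\{\tfrac32\cdot2^{p+\theta}T^*_{\min}:p\in\mathbb{Z}\}$ and $\mathcal{R}^{3/2}_{2,1,\theta}(t)=\min\{g\in\mathcal{H}^{3/2}_{2,1,\theta}:g>t\}$ for $t>0$. *)

theory Defs
  imports "HOL-Probability.Probability"
begin

text \<open>Commodities are indexed by i < n, resources by d < D.
  A policy is a function T :: nat => real (only the values at i < n matter).\<close>

definition resource_feasible ::
  "nat \<Rightarrow> nat \<Rightarrow> (nat \<Rightarrow> nat \<Rightarrow> real) \<Rightarrow> (nat \<Rightarrow> real) \<Rightarrow> bool" where
  "resource_feasible n D \<alpha> T \<longleftrightarrow>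
     (\<forall>i<n. 0 < T i) \<and> (\<forall>d<D. (\<Sum>i<n. \<alpha> i d / T i) \<le> 1)"

definition multiples :: "real \<Rightarrow> real \<Rightarrow> real set" where
  "multiples g \<Delta> = {real k * g | k::nat. k \<le> nat \<lfloor>\<Delta> / g\<rfloor>}"

definition Ncount :: "nat \<Rightarrow> (nat \<Rightarrow> real) \<Rightarrow> real \<Rightarrow> nat" where
  "Ncount n T \<Delta> = card (\<Union>i<n. multiples (T i) \<Delta>)"

definition Jcost :: "nat \<Rightarrow> real \<Rightarrow> (nat \<Rightarrow> real) \<Rightarrow> real" where
  "Jcost n K0 T = K0 * real_of_ereal
     (Limsup at_top (\<lambda>\<Delta>::real. ereal (real (Ncount n T \<Delta>) / \<Delta>)))"

definition Fcost :: "nat \<Rightarrow> real \<Rightarrow> (nat \<Rightarrow> real) \<Rightarrow> (nat \<Rightarrow> real) \<Rightarrow> (nat \<Rightarrow> real) \<Rightarrow> real" where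
  "Fcost n K0 K H T = Jcost n K0 T + (\<Sum>i<n. K i / T i + H i * T i)"

text \<open>Relaxation (P). Since K0 > 0, K0/Tmin is +infinity at Tmin = 0,
  so feasible points with finite objective have Tmin > 0.\<close>

definition P_feasible :: "nat \<Rightarrow> nat \<Rightarrow> (nat \<Rightarrow> nat \<Rightarrow> real) \<Rightarrow> real \<Rightarrow> (nat \<Rightarrow> real) \<Rightarrow> bool" where
  "P_feasible n D \<alpha> Tmin T \<longleftrightarrow>
     0 < Tmin \<and> (\<forall>i<n. Tmin \<le> T i) \<and> (\<forall>d<D. (\<Sum>i<n. \<alpha> i d / T i) \<le> 1)"

definition P_obj :: "nat \<Rightarrow> real \<Rightarrow> (nat \<Rightarrow> real) \<Rightarrow> (nat \<Rightarrow> real) \<Rightarrow> real \<Rightarrow> (nat \<Rightarrow> real) \<Rightarrow> real" where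
  "P_obj n K0 K H Tmin T = K0 / Tmin + (\<Sum>i<n. K i / T i + H i * T i)"

definition OPT_P :: "nat \<Rightarrow> nat \<Rightarrow> real \<Rightarrow> (nat \<Rightarrow> real) \<Rightarrow> (nat \<Rightarrow> real) \<Rightarrow> (nat \<Rightarrow> nat \<Rightarrow> real) \<Rightarrow> real" where
  "OPT_P n D K0 K H \<alpha> =
     Inf {P_obj n K0 K H Tmin T | Tmin T. P_feasible n D \<alpha> Tmin T}"

definition P_optimal :: "nat \<Rightarrow> nat \<Rightarrow> real \<Rightarrow> (nat \<Rightarrow> real) \<Rightarrow> (nat \<Rightarrow> real) \<Rightarrow> (nat \<Rightarrow> nat \<Rightarrow> real)
    \<Rightarrow> real \<Rightarrow> (nat \<Rightarrow> real) \<Rightarrow> bool" where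
  "P_optimal n D K0 K H \<alpha> Tmin T \<longleftrightarrow>
     P_feasible n D \<alpha> Tmin T \<and>
     (\<forall>Tmin' T'. P_feasible n D \<alpha> Tmin' T' \<longrightarrow> P_obj n K0 K H Tmin T \<le> P_obj n K0 K H Tmin' T')"

definition grid :: "real \<Rightarrow> real \<Rightarrow> real set" where
  "grid Tmin \<theta> = {2 powr (real_of_int p + \<theta>) * Tmin | p::int. True}
                 \<union> {3/2 * 2 powr (real_of_int p + \<theta>) * Tmin | p::int. True}"

definition round_up :: "real \<Rightarrow> real \<Rightarrow> real \<Rightarrow> real" where
  "round_up Tmin \<theta> t = Inf {g \<in> grid Tmin \<theta>. g > t}"

end

theory Submission
  imports Defs
begin


definition aa :: real where "aa = log 2 (3/2)"
definition nx :: "real \<Rightarrow> real" where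
  "nx x = (if x - real_of_int \<lfloor>x\<rfloor> < aa then real_of_int \<lfloor>x\<rfloor> + aa else real_of_int \<lfloor>x\<rfloor> + 1)"

lemma aa_pos: "0 < aa" and aa_lt1: "aa < 1" and pow_aa: "2 powr aa = 3/2"
proof -
  show "0 < aa" unfolding aa_def by simp
  show "aa < 1" unfolding aa_def by (simp add: log_less_one_cancel_iff)
  show "2 powr aa = 3/2" unfolding aa_def by simp
qed

lemma nx_gt: fixes x :: real shows "x < nx x"
proof -
  have "x < real_of_int \<lfloor>x\<rfloor> + 1" by linarith
  then show ?thesis unfolding nx_def by auto
qed

lemma nx_le: fixes x :: real shows "nx x \<le> x + 1"
proof -
  have "real_of_int \<lfloor>x\<rfloor> \<le> x" by linarith
  then show ?thesis unfolding nx_def using aa_lt1 by (auto; linarith)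
qed

lemma nx_grid: fixes x :: real shows "nx x = real_of_int (\<lfloor>x\<rfloor> + 1) \<or> nx x = real_of_int \<lfloor>x\<rfloor> + aa"
  unfolding nx_def by auto

lemma nx_min_int: fixes p :: int and x :: real assumes "x < p" shows "nx x \<le> p"
proof -
  have "\<lfloor>x\<rfloor> + 1 \<le> p" using assms by linarith
  then have "real_of_int \<lfloor>x\<rfloor> + 1 \<le> p" by linarith
  then show ?thesis using aa_lt1 unfolding nx_def by auto
qed

lemma nx_min_aa: fixes p :: int and x :: real assumes "x < p + aa" shows "nx x \<le> p + aa"
proof (cases "x - \<lfloor>x\<rfloor> < aa")
  case True
  have "x - aa > \<lfloor>x\<rfloor> - 1" using aa_lt1 by linarith
  then have "\<lfloor>x\<rfloor> \<le> p" using assms by linarith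
  then show ?thesis using True unfolding nx_def by auto
next
  case False
  then have "\<lfloor>x\<rfloor> < p" using assms by linarith
  then have "real_of_int \<lfloor>x\<rfloor> + 1 \<le> p" by linarith
  then show ?thesis using False aa_pos unfolding nx_def by auto
qed

lemma round_up_eq:
  assumes "Tmin > 0" "t > 0"
  shows "round_up Tmin \<theta> t = Tmin * 2 powr (\<theta> + nx (log 2 (t/Tmin) - \<theta>))"
proof -
  define x where "x = log 2 (t/Tmin) - \<theta>"
  have t: "t = Tmin * 2 powr (x + \<theta>)" unfolding x_def using assms by simp
  have g1: "2 powr (real_of_int p + \<theta>) * Tmin = Tmin * 2 powr (p + \<theta>)" for p :: int by simp
  have g2: "3/2 * 2 powr (real_of_int p + \<theta>) * Tmin = Tmin * 2 powr (p + aa + \<theta>)" for p :: int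
    by (simp add: powr_add pow_aa)
  have gr: "grid Tmin \<theta> = {Tmin * 2 powr (p + \<theta>) | p::int. True} \<union> {Tmin * 2 powr (p + aa + \<theta>) | p::int. True}"
    unfolding grid_def g1 g2 by simp
  let ?m = "Tmin * 2 powr (\<theta> + nx x)"
  show ?thesis unfolding round_up_def x_def[symmetric]
  proof (rule cInf_eq_minimum)
    show "?m \<in> {g \<in> grid Tmin \<theta>. t < g}"
    proof -
      have "x + \<theta> < \<theta> + nx x" using nx_gt[of x] by simp
      then have "?m > t" unfolding t using assms by simp
      moreover have "?m \<in> grid Tmin \<theta>"
      proof (cases "nx x = real_of_int (\<lfloor>x\<rfloor> + 1)")
        case True
        then have "?m = Tmin * 2 powr (real_of_int (\<lfloor>x\<rfloor> + 1) + \<theta>)" by (simp add: add.commute)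
        then show ?thesis unfolding gr by blast
      next
        case False
        then have "nx x = real_of_int \<lfloor>x\<rfloor> + aa" using nx_grid[of x] by blast
        then have "?m = Tmin * 2 powr (real_of_int (\<lfloor>x\<rfloor>) + aa + \<theta>)" by (simp add: add.commute)
        then show ?thesis unfolding gr by blast
      qed
      ultimately show ?thesis by simp
    qed
  next
    fix g assume "g \<in> {g \<in> grid Tmin \<theta>. t < g}"
    then have gg: "g \<in> grid Tmin \<theta>" "t < g" by auto
    from gg(1) show "?m \<le> g" unfolding gr
    proof (elim UnE CollectE exE conjE)
      fix p :: int assume g: "g = Tmin * 2 powr (p + \<theta>)"
      have "x + \<theta> < p + \<theta>" using gg(2) unfolding g t using assms by simp
      then have "nx x \<le> p" by (intro nx_min_int) simp
      then show "?m \<le> g" unfolding g using assms by (simp add: add.commute)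
    next
      fix p :: int assume g: "g = Tmin * 2 powr (p + aa + \<theta>)"
      have "x + \<theta> < p + aa + \<theta>" using gg(2) unfolding g t using assms by simp
      then have "nx x \<le> p + aa" by (intro nx_min_aa) simp
      then show "?m \<le> g" unfolding g using assms by (simp add: add.commute)
    qed
  qed
qed



lemma nat_floor_iff: fixes y :: real assumes "0 \<le> y" shows "k \<le> nat \<lfloor>y\<rfloor> \<longleftrightarrow> real k \<le> y"
  using assms by (simp add: le_nat_iff le_floor_iff)

lemma multiples_img: "multiples g \<Delta> = (\<lambda>k. real k * g) ` {..nat \<lfloor>\<Delta>/g\<rfloor>}"
  unfolding multiples_def by auto

lemma multiples_finite: "finite (multiples g \<Delta>)"
  unfolding multiples_img by simp

lemma multiples_card: assumes "g \<noteq> 0" shows "card (multiples g \<Delta>) = Suc (nat \<lfloor>\<Delta>/g\<rfloor>)"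
proof -
  have "inj_on (\<lambda>k. real k * g) {..nat \<lfloor>\<Delta>/g\<rfloor>}" using assms by (auto simp: inj_on_def)
  then show ?thesis unfolding multiples_img by (simp add: card_image)
qed

lemma multiples_sub:
  assumes "p > 0" "m \<ge> 1" "\<Delta> \<ge> 0"
  shows "multiples (real m * p) \<Delta> \<subseteq> multiples p \<Delta>"
proof
  fix x assume "x \<in> multiples (real m * p) \<Delta>"
  then obtain k where x: "x = real k * (real m * p)" and k: "k \<le> nat \<lfloor>\<Delta> / (real m * p)\<rfloor>"
    unfolding multiples_def by auto
  have mp: "real m * p > 0" using assms by simp
  have "real k \<le> \<Delta> / (real m * p)" using k nat_floor_iff[of "\<Delta> / (real m * p)" k] assms mp by simp
  then have "real k * (real m * p) \<le> \<Delta>" using mp by (simp add: pos_le_divide_eq)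
  then have "real (k * m) \<le> \<Delta> / p" using assms by (simp add: pos_le_divide_eq mult.assoc)
  then have "k * m \<le> nat \<lfloor>\<Delta> / p\<rfloor>" using nat_floor_iff[of "\<Delta>/p" "k*m"] assms by simp
  moreover have "x = real (k * m) * p" unfolding x by simp
  ultimately show "x \<in> multiples p \<Delta>" unfolding multiples_def by blast
qed

lemma Ncount_bound:
  assumes p: "p > 0" and q: "q > 0" and r: "r \<ge> 1" and s: "s \<ge> 1" and L: "real r * p = real s * q"
    and T: "\<forall>i<n. \<exists>m::nat. m \<ge> 1 \<and> (T i = real m * p \<or> T i = real m * q)"
    and D: "\<Delta> > 0"
  shows "real (Ncount n T \<Delta>) \<le> \<Delta> * (1/p + 1/q - 1/(real r * p)) + 2"
proof -
  let ?Mp = "multiples p \<Delta>" and ?Mq = "multiples q \<Delta>" and ?Ml = "multiples (real r * p) \<Delta>"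
  have sub: "(\<Union>i<n. multiples (T i) \<Delta>) \<subseteq> ?Mp \<union> ?Mq"
  proof (intro UN_least)
    fix i assume "i \<in> {..<n}"
    then obtain m :: nat where "m \<ge> 1" "T i = real m * p \<or> T i = real m * q" using T by auto
    then show "multiples (T i) \<Delta> \<subseteq> ?Mp \<union> ?Mq"
      using multiples_sub[OF p, of m \<Delta>] multiples_sub[OF q, of m \<Delta>] D by auto
  qed
  have fin: "finite (?Mp \<union> ?Mq)" by (simp add: multiples_finite)
  have "Ncount n T \<Delta> \<le> card (?Mp \<union> ?Mq)"
    unfolding Ncount_def by (rule card_mono[OF fin sub])
  have Lsub: "?Ml \<subseteq> ?Mp \<inter> ?Mq"
  proof -
    have D0: "\<Delta> \<ge> 0" using D by simp
    show ?thesis using multiples_sub[OF p r D0] multiples_sub[OF q s D0] L by (metis Int_greatest)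
  qed
  have "card ?Ml \<le> card (?Mp \<inter> ?Mq)" by (rule card_mono[OF _ Lsub]) (simp add: multiples_finite)
  have cu: "card ?Mp + card ?Mq = card (?Mp \<union> ?Mq) + card (?Mp \<inter> ?Mq)"
    by (rule card_Un_Int) (auto simp: multiples_finite)
  have Lpos: "real r * p > 0" using p r by simp
  have c1: "real (card ?Mp) \<le> \<Delta>/p + 1"
    using multiples_card[of p \<Delta>] p D by simp
  have c2: "real (card ?Mq) \<le> \<Delta>/q + 1"
    using multiples_card[of q \<Delta>] q D by simp
  have c3: "real (card ?Ml) \<ge> \<Delta>/(real r * p)"
  proof -
    define y where "y = \<Delta>/(real r * p)"
    have y0: "y \<ge> 0" unfolding y_def using Lpos D by simp
    have "card ?Ml = Suc (nat \<lfloor>y\<rfloor>)" unfolding y_def using multiples_card[of "real r * p" \<Delta>] Lpos by (simp only: less_irrefl not_False_eq_True)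
    moreover have "real (nat \<lfloor>y\<rfloor>) = real_of_int \<lfloor>y\<rfloor>" using y0 by simp
    ultimately have "real (card ?Ml) = real_of_int \<lfloor>y\<rfloor> + 1" by simp
    moreover have "y < real_of_int \<lfloor>y\<rfloor> + 1" by linarith
    ultimately show ?thesis unfolding y_def[symmetric] by linarith
  qed
  have "real (Ncount n T \<Delta>) \<le> real (card (?Mp \<union> ?Mq))"
    using \<open>Ncount n T \<Delta> \<le> card (?Mp \<union> ?Mq)\<close> by simp
  also have "\<dots> = real (card ?Mp) + real (card ?Mq) - real (card (?Mp \<inter> ?Mq))"
    using cu by (simp add: of_nat_add[symmetric] del: of_nat_add)
  also have "\<dots> \<le> (\<Delta>/p + 1) + (\<Delta>/q + 1) - \<Delta>/(real r * p)"
    using c1 c2 c3 \<open>card ?Ml \<le> card (?Mp \<inter> ?Mq)\<close> by (smt (verit) of_nat_mono)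
  also have "\<dots> = \<Delta> * (1/p + 1/q - 1/(real r * p)) + 2" by (simp add: field_simps)
  finally show ?thesis .
qed

lemma Jcost_le:
  assumes K0: "K0 \<ge> 0" and p: "p > 0" and q: "q > 0" and r: "r \<ge> 1" and s: "s \<ge> 1" and L: "real r * p = real s * q"
    and T: "\<forall>i<n. \<exists>m::nat. m \<ge> 1 \<and> (T i = real m * p \<or> T i = real m * q)"
  shows "Jcost n K0 T \<le> K0 * (1/p + 1/q - 1/(real r * p))"
proof -
  define c where "c = 1/p + 1/q - 1/(real r * p)"
  let ?f = "\<lambda>\<Delta>::real. ereal (real (Ncount n T \<Delta>) / \<Delta>)"
  have ev: "eventually (\<lambda>\<Delta>. ?f \<Delta> \<le> ereal (c + 2/\<Delta>)) at_top"
  proof (rule eventually_mono[OF eventually_gt_at_top[of 0]])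
    fix \<Delta> :: real assume D: "\<Delta> > 0"
    have "real (Ncount n T \<Delta>) \<le> \<Delta> * c + 2" unfolding c_def by (rule Ncount_bound[OF p q r s L T D])
    then have "real (Ncount n T \<Delta>) / \<Delta> \<le> c + 2/\<Delta>" using D by (simp add: field_simps)
    then show "?f \<Delta> \<le> ereal (c + 2/\<Delta>)" by simp
  qed
  have lim: "((\<lambda>\<Delta>::real. ereal (c + 2/\<Delta>)) \<longlongrightarrow> ereal c) at_top"
  proof -
    have "((\<lambda>\<Delta>::real. 2/\<Delta>) \<longlongrightarrow> 0) at_top"
      by (intro tendsto_divide_0[OF tendsto_const] filterlim_ident[THEN filterlim_at_top_imp_at_infinity])
    then have "((\<lambda>\<Delta>::real. c + 2/\<Delta>) \<longlongrightarrow> c + 0) at_top" by (intro tendsto_add tendsto_const)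
    then show ?thesis by (simp add: lim_ereal)
  qed
  have up: "Limsup at_top ?f \<le> ereal c"
    using Limsup_mono[OF ev] lim_imp_Limsup[OF trivial_limit_at_top_linorder lim] by simp
  have lo: "0 \<le> Limsup at_top ?f"
    by (rule le_Limsup[OF trivial_limit_at_top_linorder]) (auto intro!: eventually_mono[OF eventually_gt_at_top[of 0]])
  have "real_of_ereal (Limsup at_top ?f) \<le> c"
    using up lo by (cases "Limsup at_top ?f") auto
  then show ?thesis unfolding Jcost_def c_def using K0 by (simp add: mult_left_mono)
qed

lemma Jcost_nonneg:
  assumes K0: "K0 \<ge> 0" shows "Jcost n K0 T \<ge> 0"
proof -
  let ?f = "\<lambda>\<Delta>::real. ereal (real (Ncount n T \<Delta>) / \<Delta>)"
  have lo: "0 \<le> Limsup at_top ?f"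
    by (rule le_Limsup[OF trivial_limit_at_top_linorder]) (auto intro!: eventually_mono[OF eventually_gt_at_top[of 0]])
  then have "real_of_ereal (Limsup at_top ?f) \<ge> 0" by (simp add: real_of_ereal_pos)
  then show ?thesis unfolding Jcost_def using K0 by simp
qed



lemma Jcost_cong: "(\<And>i. i < n \<Longrightarrow> T i = T' i) \<Longrightarrow> Jcost n K0 T = Jcost n K0 T'"
  unfolding Jcost_def Ncount_def by simp

lemma multiples_scale: "multiples (c * g) \<Delta> = (\<lambda>x. c * x) ` multiples g (\<Delta> / c)"
  unfolding multiples_img image_image by (simp add: mult.commute mult.left_commute divide_divide_eq_left)

lemma Ncount_scale: assumes "c \<noteq> 0" shows "Ncount n (\<lambda>i. c * v i) \<Delta> = Ncount n v (\<Delta> / c)"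
proof -
  have "(\<Union>i<n. multiples (c * v i) \<Delta>) = (\<lambda>x. c * x) ` (\<Union>i<n. multiples (v i) (\<Delta> / c))"
    unfolding multiples_scale image_UN by simp
  moreover have "inj_on (\<lambda>x. c * x) A" for A :: "real set" using assms by (auto simp: inj_on_def)
  ultimately show ?thesis unfolding Ncount_def by (simp add: card_image)
qed

lemma filtermap_div_at_top: assumes "(c::real) > 0" shows "filtermap (\<lambda>\<Delta>. \<Delta> / c) at_top = at_top"
proof (rule filtermap_fun_inverse[where g="\<lambda>y. c * y"])
  show "filterlim (\<lambda>y. c * y) at_top at_top"
    using filterlim_tendsto_pos_mult_at_top[OF tendsto_const[of c] assms filterlim_ident] .
  have "filterlim (\<lambda>y. inverse c * y) at_top at_top"
    using filterlim_tendsto_pos_mult_at_top[OF tendsto_const[of "inverse c"] _ filterlim_ident] assms by simp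
  then show "filterlim (\<lambda>\<Delta>. \<Delta> / c) at_top at_top" by (simp add: divide_inverse mult.commute)
  show "\<forall>\<^sub>F x in at_top. c * x / c = x" using assms by simp
qed

lemma Jcost_scale: assumes c: "c > 0" shows "Jcost n K0 (\<lambda>i. c * v i) = Jcost n K0 v / c"
proof -
  let ?g = "\<lambda>y::real. ereal (real (Ncount n v y) / y)"
  have eq: "(\<lambda>\<Delta>. ereal (real (Ncount n (\<lambda>i. c * v i) \<Delta>) / \<Delta>)) = (\<lambda>\<Delta>. ereal (1/c) * ?g (\<Delta>/c))"
  proof
    fix \<Delta> :: real
    show "ereal (real (Ncount n (\<lambda>i. c * v i) \<Delta>) / \<Delta>) = ereal (1/c) * ?g (\<Delta>/c)"
      unfolding Ncount_scale[of c n v \<Delta>, OF c[THEN less_imp_neq, symmetric]] using c by simp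
  qed
  have inj: "inj (\<lambda>\<Delta>::real. \<Delta> / c)" using c by (auto simp: inj_def)
  have "Limsup at_top (\<lambda>\<Delta>. ?g (\<Delta>/c)) = Limsup (filtermap (\<lambda>\<Delta>. \<Delta> / c) at_top) ?g"
    using Limsup_filtermap_eq[OF inj, of at_top ?g] by simp
  also have "\<dots> = Limsup at_top ?g" using filtermap_div_at_top[OF c] by simp
  finally have L: "Limsup at_top (\<lambda>\<Delta>. ?g (\<Delta>/c)) = Limsup at_top ?g" .
  have "Limsup at_top (\<lambda>\<Delta>. ereal (1/c) * ?g (\<Delta>/c)) = ereal (1/c) * Limsup at_top (\<lambda>\<Delta>. ?g (\<Delta>/c))"
    by (rule Limsup_ereal_mult_left) (use c in auto)
  then show ?thesis unfolding Jcost_def eq L by simp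
qed



definition code :: "nat \<Rightarrow> (nat \<Rightarrow> real) \<Rightarrow> real \<Rightarrow> (int \<times> bool) list" where
  "code n u \<theta> = map (\<lambda>i. (\<lfloor>u i - \<theta>\<rfloor>, u i - \<theta> - real_of_int \<lfloor>u i - \<theta>\<rfloor> < aa)) [0..<n]"

lemma floor_shift_meas: "(\<lambda>\<theta>::real. \<lfloor>c - \<theta>\<rfloor>) \<in> measurable borel (count_space UNIV)"
  by (rule measurable_compose[OF _ measurable_real_floor]) simp

lemma code_meas: "code n u \<in> measurable borel (count_space UNIV)"
proof (subst measurable_count_space_eq2_countable, intro conjI ballI)
  show "code n u \<in> space borel \<rightarrow> UNIV" by simp
  fix l :: "(int \<times> bool) list"
  have eq: "code n u -` {l} \<inter> space borel = {\<theta> \<in> space borel. length l = n \<and>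
      (\<forall>i\<in>{..<n}. \<lfloor>u i - \<theta>\<rfloor> = fst (l!i) \<and> (u i - \<theta> - real_of_int \<lfloor>u i - \<theta>\<rfloor> < aa) = snd (l!i))}"
  proof (intro set_eqI iffI)
    fix \<theta> assume "\<theta> \<in> code n u -` {l} \<inter> space borel"
    then have "code n u \<theta> = l" by simp
    then show "\<theta> \<in> {\<theta> \<in> space borel. length l = n \<and>
      (\<forall>i\<in>{..<n}. \<lfloor>u i - \<theta>\<rfloor> = fst (l!i) \<and> (u i - \<theta> - real_of_int \<lfloor>u i - \<theta>\<rfloor> < aa) = snd (l!i))}"
      unfolding code_def by auto
  next
    fix \<theta> assume a: "\<theta> \<in> {\<theta> \<in> space borel. length l = n \<and>
      (\<forall>i\<in>{..<n}. \<lfloor>u i - \<theta>\<rfloor> = fst (l!i) \<and> (u i - \<theta> - real_of_int \<lfloor>u i - \<theta>\<rfloor> < aa) = snd (l!i))}"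
    have "code n u \<theta> = l" unfolding code_def
    proof (rule nth_equalityI)
      show "length (map (\<lambda>i. (\<lfloor>u i - \<theta>\<rfloor>, u i - \<theta> - real_of_int \<lfloor>u i - \<theta>\<rfloor> < aa)) [0..<n]) = length l"
        using a by simp
      fix i assume "i < length (map (\<lambda>i. (\<lfloor>u i - \<theta>\<rfloor>, u i - \<theta> - real_of_int \<lfloor>u i - \<theta>\<rfloor> < aa)) [0..<n])"
      then have i: "i < n" by simp
      have h: "\<lfloor>u i - \<theta>\<rfloor> = fst (l!i) \<and> (u i - \<theta> - real_of_int \<lfloor>u i - \<theta>\<rfloor> < aa) = snd (l!i)"
        using a i by blast
      have "map (\<lambda>i. (\<lfloor>u i - \<theta>\<rfloor>, u i - \<theta> - real_of_int \<lfloor>u i - \<theta>\<rfloor> < aa)) [0..<n] ! i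
         = (\<lfloor>u i - \<theta>\<rfloor>, u i - \<theta> - real_of_int \<lfloor>u i - \<theta>\<rfloor> < aa)" using i by simp
      also have "\<dots> = l!i" using h by (cases "l ! i") auto
      finally show "map (\<lambda>i. (\<lfloor>u i - \<theta>\<rfloor>, u i - \<theta> - real_of_int \<lfloor>u i - \<theta>\<rfloor> < aa)) [0..<n] ! i = l ! i" .
    qed
    then show "\<theta> \<in> code n u -` {l} \<inter> space borel" by simp
  qed
  have p1: "Measurable.pred borel (\<lambda>\<theta>. \<lfloor>u i - \<theta>\<rfloor> = fst (l!i))" for i
  proof -
    have "(\<lambda>\<theta>. \<lfloor>u i - \<theta>\<rfloor>) -` {fst (l!i)} \<inter> space borel \<in> sets borel"
      by (rule measurable_sets[OF floor_shift_meas]) simp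
    moreover have "(\<lambda>\<theta>. \<lfloor>u i - \<theta>\<rfloor>) -` {fst (l!i)} \<inter> space borel = {\<theta> \<in> space borel. \<lfloor>u i - \<theta>\<rfloor> = fst (l!i)}"
      by auto
    ultimately show ?thesis unfolding pred_def by simp
  qed
  have p2: "Measurable.pred borel (\<lambda>\<theta>. (u i - \<theta> - real_of_int \<lfloor>u i - \<theta>\<rfloor> < aa) = snd (l!i))" for i
    by measurable
  show "code n u -` {l} \<inter> space borel \<in> sets borel"
    unfolding eq using p1 p2 by measurable
qed



definition dec :: "(int \<times> bool) list \<Rightarrow> nat \<Rightarrow> real" where
  "dec l i = 2 powr (real_of_int (fst (l!i)) + (if snd (l!i) then aa else 1))"

lemma dec_code': "i < n \<Longrightarrow> dec (code n u \<theta>) i = 2 powr nx (u i - \<theta>)"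
  unfolding dec_def code_def nx_def by simp

lemma RU_eq:
  assumes "Tmin > 0" "t > 0"
  shows "round_up Tmin \<theta> t = (Tmin * 2 powr \<theta>) * 2 powr nx (log 2 (t/Tmin) - \<theta>)"
  using round_up_eq[OF assms] by (simp add: powr_add)

lemma Fcost_meas:
  assumes Tmin: "Tmin > 0" and t: "\<And>i. i < n \<Longrightarrow> t i > 0"
  shows "(\<lambda>\<theta>. Fcost n K0 K H (\<lambda>i. round_up Tmin \<theta> (t i))) \<in> borel_measurable borel"
proof -
  define u where "u i = log 2 (t i / Tmin)" for i
  have eqF: "Fcost n K0 K H (\<lambda>i. round_up Tmin \<theta> (t i)) =
     Jcost n K0 (dec (code n u \<theta>)) / (Tmin * 2 powr \<theta>) +
     (\<Sum>i<n. K i / (Tmin * 2 powr (\<theta> + nx (u i - \<theta>))) + H i * (Tmin * 2 powr (\<theta> + nx (u i - \<theta>))))"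
    for \<theta>
  proof -
    have c: "Tmin * 2 powr \<theta> > 0" using Tmin by simp
    have "Jcost n K0 (\<lambda>i. round_up Tmin \<theta> (t i)) = Jcost n K0 (\<lambda>i. (Tmin * 2 powr \<theta>) * dec (code n u \<theta>) i)"
      by (rule Jcost_cong) (simp add: RU_eq[OF Tmin t] dec_code' u_def)
    also have "\<dots> = Jcost n K0 (dec (code n u \<theta>)) / (Tmin * 2 powr \<theta>)"
      by (rule Jcost_scale[OF c])
    finally have J: "Jcost n K0 (\<lambda>i. round_up Tmin \<theta> (t i)) = Jcost n K0 (dec (code n u \<theta>)) / (Tmin * 2 powr \<theta>)" .
    have S: "(\<Sum>i<n. K i / round_up Tmin \<theta> (t i) + H i * round_up Tmin \<theta> (t i)) =
       (\<Sum>i<n. K i / (Tmin * 2 powr (\<theta> + nx (u i - \<theta>))) + H i * (Tmin * 2 powr (\<theta> + nx (u i - \<theta>))))"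
      by (rule sum.cong) (simp_all add: round_up_eq[OF Tmin t] u_def)
    show ?thesis unfolding Fcost_def J S ..
  qed
  have m1: "(\<lambda>\<theta>. Jcost n K0 (dec (code n u \<theta>))) \<in> borel_measurable borel"
    by (rule measurable_compose[OF code_meas]) simp
  have m2: "(\<lambda>\<theta>. (\<Sum>i<n. K i / (Tmin * 2 powr (\<theta> + nx (u i - \<theta>))) + H i * (Tmin * 2 powr (\<theta> + nx (u i - \<theta>)))))
      \<in> borel_measurable borel"
    unfolding nx_def by measurable
  show ?thesis unfolding eqF using m1 m2 by measurable
qed



lemma U_eq: "uniform_measure lborel {0..1::real} = density lborel (\<lambda>x. ennreal (indicator {0..1::real} x))"
  unfolding uniform_measure_def by (simp add: ennreal_indicator divide_ennreal_def)

lemma U_lemma: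
  fixes f :: "real \<Rightarrow> real"
  assumes fm: "f \<in> borel_measurable borel" and bnd: "\<And>x. x \<in> {0..1} \<Longrightarrow> \<bar>f x\<bar> \<le> B"
  shows "integrable (uniform_measure lborel {0..1::real}) f"
    and "f integrable_on {0..1}"
    and "integral\<^sup>L (uniform_measure lborel {0..1::real}) f = integral {0..1} f"
proof -
  have fm': "f \<in> borel_measurable lborel" using fm by simp
  have si: "set_integrable lborel {0..1::real} f"
    unfolding set_integrable_def
  proof (rule integrableI_bounded_set[where A="{0..1}" and B=B])
    show "(\<lambda>x. indicat_real {0..1} x *\<^sub>R f x) \<in> borel_measurable lborel" using fm' by measurable
    show "AE x in lborel. x \<in> {0..1} \<longrightarrow> norm (indicat_real {0..1} x *\<^sub>R f x) \<le> B"
      using bnd by (auto simp: indicator_def)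
  qed auto
  show "integrable (uniform_measure lborel {0..1::real}) f"
    unfolding U_eq using si fm' unfolding set_integrable_def
    by (subst integrable_density) auto
  show "f integrable_on {0..1}" using set_borel_integral_eq_integral(1)[OF si] .
  have "integral\<^sup>L (uniform_measure lborel {0..1::real}) f = integral\<^sup>L lborel (\<lambda>x. indicat_real {0..1} x *\<^sub>R f x)"
    unfolding U_eq using fm' by (subst integral_density) auto
  also have "\<dots> = integral {0..1} f"
    using set_borel_integral_eq_integral(2)[OF si] unfolding set_lebesgue_integral_def .
  finally show "integral\<^sup>L (uniform_measure lborel {0..1::real}) f = integral {0..1} f" .
qed

lemma piece_up:
  fixes f :: "real \<Rightarrow> real"
  assumes "p \<le> q" and eq: "\<And>\<theta>. \<theta> \<in> {p<..<q} \<Longrightarrow> f \<theta> = 2 powr (\<theta> + c)"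
  shows "(f has_integral (2 powr (q + c) - 2 powr (p + c)) / ln 2) {p..q}"
proof -
  have "(f has_integral ((\<lambda>\<theta>. 2 powr (\<theta> + c) / ln 2) q - (\<lambda>\<theta>. 2 powr (\<theta> + c) / ln 2) p)) {p..q}"
  proof (rule fundamental_theorem_of_calculus_interior[OF assms(1)])
    show "continuous_on {p..q} (\<lambda>\<theta>. 2 powr (\<theta> + c) / ln 2)"
      by (intro continuous_intros) auto
    fix \<theta> assume th: "\<theta> \<in> {p<..<q}"
    have "((\<lambda>\<theta>. 2 powr (\<theta> + c) / ln 2) has_real_derivative 2 powr (\<theta> + c)) (at \<theta>)"
      by (rule derivative_eq_intros refl | simp)+
    then show "((\<lambda>\<theta>. 2 powr (\<theta> + c) / ln 2) has_vector_derivative f \<theta>) (at \<theta>)"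
      using eq[OF th] by (simp add: has_real_derivative_iff_has_vector_derivative)
  qed
  then show ?thesis by (simp add: diff_divide_distrib)
qed

lemma piece_down:
  fixes f :: "real \<Rightarrow> real"
  assumes "p \<le> q" and eq: "\<And>\<theta>. \<theta> \<in> {p<..<q} \<Longrightarrow> f \<theta> = 2 powr (c - \<theta>)"
  shows "(f has_integral (2 powr (c - p) - 2 powr (c - q)) / ln 2) {p..q}"
proof -
  have "(f has_integral ((\<lambda>\<theta>. - (2 powr (c - \<theta>)) / ln 2) q - (\<lambda>\<theta>. - (2 powr (c - \<theta>)) / ln 2) p)) {p..q}"
  proof (rule fundamental_theorem_of_calculus_interior[OF assms(1)])
    show "continuous_on {p..q} (\<lambda>\<theta>. - (2 powr (c - \<theta>)) / ln 2)"
      by (intro continuous_intros) auto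
    fix \<theta> assume th: "\<theta> \<in> {p<..<q}"
    have "((\<lambda>\<theta>. - (2 powr (c - \<theta>)) / ln 2) has_real_derivative 2 powr (c - \<theta>)) (at \<theta>)"
      by (rule derivative_eq_intros refl | simp)+
    then show "((\<lambda>\<theta>. - (2 powr (c - \<theta>)) / ln 2) has_vector_derivative f \<theta>) (at \<theta>)"
      using eq[OF th] by (simp add: has_real_derivative_iff_has_vector_derivative)
  qed
  then show ?thesis by (simp add: diff_divide_distrib)
qed



lemma nx_at: "\<lfloor>x\<rfloor> = m \<Longrightarrow> nx x = (if x - real_of_int m < aa then real_of_int m + aa else real_of_int m + 1)"
  unfolding nx_def by simp

lemma pow_aa_m1: "2 powr (aa - 1) = 3/4" and pow_1_aa: "2 powr (1 - aa) = 4/3"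
  by (simp_all add: powr_diff pow_aa)

lemma int_up: "((\<lambda>\<theta>. 2 powr (\<theta> + nx (u - \<theta>))) has_integral 2 powr u * (5/6) / ln 2) {0..1}"
proof -
  define k where "k = \<lfloor>u\<rfloor>"
  define v where "v = u - real_of_int k"
  have v0: "0 \<le> v" and v1: "v < 1" unfolding v_def k_def by linarith+
  have u: "u = real_of_int k + v" unfolding v_def by simp
  let ?f = "\<lambda>\<theta>. 2 powr (\<theta> + nx (u - \<theta>))"
  have E: "2 powr (real_of_int k + v + c) = 2 powr u * 2 powr c" for c
    unfolding u by (simp add: powr_add)
  show ?thesis
  proof (cases "aa \<le> v")
    case True
    have h1: "(?f has_integral (2 powr ((v - aa) + (real_of_int k + 1)) - 2 powr (0 + (real_of_int k + 1))) / ln 2) {0..v - aa}"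
    proof (rule piece_up)
      fix \<theta> :: real assume th: "\<theta> \<in> {0<..<v - aa}"
      have fl: "\<lfloor>u - \<theta>\<rfloor> = k" unfolding u using th aa_pos v1 by (simp add: floor_eq_iff)
      show "?f \<theta> = 2 powr (\<theta> + (real_of_int k + 1))" using nx_at[OF fl] th unfolding u by simp
    qed (use True in simp)
    have h2: "(?f has_integral (2 powr (v + (real_of_int k + aa)) - 2 powr ((v - aa) + (real_of_int k + aa))) / ln 2) {v - aa..v}"
    proof (rule piece_up)
      fix \<theta> :: real assume th: "\<theta> \<in> {v - aa<..<v}"
      have fl: "\<lfloor>u - \<theta>\<rfloor> = k" unfolding u using th aa_lt1 v1 by (simp add: floor_eq_iff)
      show "?f \<theta> = 2 powr (\<theta> + (real_of_int k + aa))" using nx_at[OF fl] th unfolding u by simp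
    qed (use aa_pos in simp)
    have h3: "(?f has_integral (2 powr (1 + real_of_int k) - 2 powr (v + real_of_int k)) / ln 2) {v..1}"
    proof (rule piece_up)
      fix \<theta> :: real assume th: "\<theta> \<in> {v<..<1}"
      have fl: "\<lfloor>u - \<theta>\<rfloor> = k - 1" unfolding u using th v0 by (simp add: floor_eq_iff)
      have "\<not> (u - \<theta> - real_of_int (k - 1) < aa)" unfolding u using th True by simp
      then show "?f \<theta> = 2 powr (\<theta> + real_of_int k)" using nx_at[OF fl] by simp
    qed (use v1 in simp)
    define X where "X = ((2 powr ((v - aa) + (real_of_int k + 1)) - 2 powr (0 + (real_of_int k + 1))) / ln 2
        + (2 powr (v + (real_of_int k + aa)) - 2 powr ((v - aa) + (real_of_int k + aa))) / ln 2)
        + (2 powr (1 + real_of_int k) - 2 powr (v + real_of_int k)) / ln 2"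
    have hI: "(?f has_integral X) {0..1}" unfolding X_def
      using has_integral_combine[OF _ _ has_integral_combine[OF _ _ h1 h2] h3] True v1 aa_lt1 less_imp_le[OF aa_pos] by simp
    have e1: "2 powr ((v - aa) + (real_of_int k + 1)) = 2 powr u * (4/3)"
      using E[of "1 - aa"] pow_1_aa by (simp add: algebra_simps)
    have e2: "2 powr (v + (real_of_int k + aa)) = 2 powr u * (3/2)"
      using E[of "aa"] pow_aa by (simp add: algebra_simps)
    have e3: "2 powr ((v - aa) + (real_of_int k + aa)) = 2 powr u"
      using E[of 0] by (simp add: algebra_simps)
    have e4: "2 powr (v + real_of_int k) = 2 powr u"
      using E[of 0] by (simp add: algebra_simps)
    have e5: "2 powr (0 + (real_of_int k + 1)) = 2 powr (1 + real_of_int k)" by (simp add: algebra_simps)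
    have "X = 2 powr u * (5/6) / ln 2" unfolding X_def e1 e2 e3 e4 e5 by (simp add: field_simps)
    then show ?thesis using hI by simp
  next
    case False
    then have va: "v < aa" by simp
    have h1: "(?f has_integral (2 powr (v + (real_of_int k + aa)) - 2 powr (0 + (real_of_int k + aa))) / ln 2) {0..v}"
    proof (rule piece_up)
      fix \<theta> :: real assume th: "\<theta> \<in> {0<..<v}"
      have fl: "\<lfloor>u - \<theta>\<rfloor> = k" unfolding u using th v1 by (simp add: floor_eq_iff)
      show "?f \<theta> = 2 powr (\<theta> + (real_of_int k + aa))" using nx_at[OF fl] th va unfolding u by simp
    qed (use v0 in simp)
    have h2: "(?f has_integral (2 powr ((v + 1 - aa) + real_of_int k) - 2 powr (v + real_of_int k)) / ln 2) {v..v + 1 - aa}"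
    proof (rule piece_up)
      fix \<theta> :: real assume th: "\<theta> \<in> {v<..<v + 1 - aa}"
      have fl: "\<lfloor>u - \<theta>\<rfloor> = k - 1" unfolding u using th aa_pos by (simp add: floor_eq_iff)
      have "\<not> (u - \<theta> - real_of_int (k - 1) < aa)" unfolding u using th by simp
      then show "?f \<theta> = 2 powr (\<theta> + real_of_int k)" using nx_at[OF fl] by simp
    qed (use aa_lt1 in simp)
    have h3: "(?f has_integral (2 powr (1 + (real_of_int k - 1 + aa)) - 2 powr ((v + 1 - aa) + (real_of_int k - 1 + aa))) / ln 2) {v + 1 - aa..1}"
    proof (rule piece_up)
      fix \<theta> :: real assume th: "\<theta> \<in> {v + 1 - aa<..<1}"
      have fl: "\<lfloor>u - \<theta>\<rfloor> = k - 1" unfolding u using th v0 aa_lt1 by (simp add: floor_eq_iff)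
      have "u - \<theta> - real_of_int (k - 1) < aa" unfolding u using th by simp
      then show "?f \<theta> = 2 powr (\<theta> + (real_of_int k - 1 + aa))" using nx_at[OF fl] by simp
    qed (use va in simp)
    define X where "X = ((2 powr (v + (real_of_int k + aa)) - 2 powr (0 + (real_of_int k + aa))) / ln 2
        + (2 powr ((v + 1 - aa) + real_of_int k) - 2 powr (v + real_of_int k)) / ln 2)
        + (2 powr (1 + (real_of_int k - 1 + aa)) - 2 powr ((v + 1 - aa) + (real_of_int k - 1 + aa))) / ln 2"
    have hI: "(?f has_integral X) {0..1}" unfolding X_def
      using has_integral_combine[OF _ _ has_integral_combine[OF _ _ h1 h2] h3] va v0 aa_lt1 by simp
    have e1: "2 powr (v + (real_of_int k + aa)) = 2 powr u * (3/2)"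
      using E[of "aa"] pow_aa by (simp add: algebra_simps)
    have e2: "2 powr ((v + 1 - aa) + real_of_int k) = 2 powr u * (4/3)"
      using E[of "1 - aa"] pow_1_aa by (simp add: algebra_simps)
    have e4: "2 powr (v + real_of_int k) = 2 powr u"
      using E[of 0] by (simp add: algebra_simps)
    have e3: "2 powr ((v + 1 - aa) + (real_of_int k - 1 + aa)) = 2 powr u"
      using E[of 0] by (simp add: algebra_simps)
    have e5: "2 powr (1 + (real_of_int k - 1 + aa)) = 2 powr (0 + (real_of_int k + aa))"
      by (simp add: algebra_simps)
    have "X = 2 powr u * (5/6) / ln 2" unfolding X_def e1 e2 e3 e4 e5 by (simp add: field_simps)
    then show ?thesis using hI by simp
  qed
qed



definition bJ :: "real \<Rightarrow> real" where
  "bJ \<theta> = (if \<theta> \<le> 1 - aa then 4/3 else 2) * 2 powr (-\<theta>)"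

lemma piece_downC:
  fixes f :: "real \<Rightarrow> real"
  assumes "p \<le> q" and eq: "\<And>\<theta>. \<theta> \<in> {p<..<q} \<Longrightarrow> f \<theta> = C * 2 powr (-\<theta>)"
  shows "(f has_integral C * (2 powr (-p) - 2 powr (-q)) / ln 2) {p..q}"
proof -
  have "(f has_integral ((\<lambda>\<theta>. - (C * 2 powr (-\<theta>)) / ln 2) q - (\<lambda>\<theta>. - (C * 2 powr (-\<theta>)) / ln 2) p)) {p..q}"
  proof (rule fundamental_theorem_of_calculus_interior[OF assms(1)])
    show "continuous_on {p..q} (\<lambda>\<theta>. - (C * 2 powr (-\<theta>)) / ln 2)"
      by (intro continuous_intros) auto
    fix \<theta> assume th: "\<theta> \<in> {p<..<q}"
    have "((\<lambda>\<theta>. - (C * 2 powr (-\<theta>)) / ln 2) has_real_derivative C * 2 powr (-\<theta>)) (at \<theta>)"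
      by (rule derivative_eq_intros refl | simp)+
    then show "((\<lambda>\<theta>. - (C * 2 powr (-\<theta>)) / ln 2) has_vector_derivative f \<theta>) (at \<theta>)"
      using eq[OF th] by (simp add: has_real_derivative_iff_has_vector_derivative)
  qed
  then show ?thesis by (simp add: field_simps)
qed

lemma int_bJ: "(bJ has_integral (5/6) / ln 2) {0..1}"
proof -
  have h1: "(bJ has_integral (4/3) * (2 powr (-0) - 2 powr (-(1-aa))) / ln 2) {0..1-aa}"
    by (rule piece_downC) (use aa_lt1 in \<open>auto simp: bJ_def\<close>)
  have h2: "(bJ has_integral 2 * (2 powr (-(1-aa)) - 2 powr (-1)) / ln 2) {1-aa..1}"
    by (rule piece_downC) (use aa_pos in \<open>auto simp: bJ_def\<close>)
  have hI: "(bJ has_integral ((4/3) * (2 powr (-0) - 2 powr (-(1-aa))) / ln 2 + 2 * (2 powr (-(1-aa)) - 2 powr (-1)) / ln 2)) {0..1}"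
    using has_integral_combine[OF _ _ h1 h2] aa_pos aa_lt1 by simp
  have e: "2 powr (-(1-aa)) = 3/4" using pow_aa_m1 by simp
  have e2: "2 powr (-1::real) = 1/2" by (simp add: powr_minus_divide)
  have "(4/3) * (2 powr (-0) - 2 powr (-(1-aa))) / ln 2 + 2 * (2 powr (-(1-aa)) - 2 powr (-1)) / ln 2 = (5/6) / ln 2"
    unfolding e e2 by (simp add: field_simps)
  then show ?thesis using hI by simp
qed

lemma pow2_nat: "0 \<le> j \<Longrightarrow> 2 powr (real_of_int j) = real ((2::nat) ^ nat j)"
proof -
  assume "0 \<le> j"
  then obtain m where m: "j = int m" using zero_le_imp_eq_int by blast
  have "2 powr (real m) = (2::real) ^ m" by (rule powr_realpow) simp
  then show ?thesis unfolding m by simp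
qed

lemma J_bound:
  assumes Tmin: "Tmin > 0" and t: "\<And>i. i < n \<Longrightarrow> Tmin \<le> t i" and K0: "K0 \<ge> 0"
    and th: "\<theta> \<in> {0..1}"
  shows "Jcost n K0 (\<lambda>i. round_up Tmin \<theta> (t i)) \<le> K0 * bJ \<theta> / Tmin"
proof -
  define A where "A = Tmin * 2 powr \<theta>"
  have A: "A > 0" unfolding A_def using Tmin by simp
  have invA: "1 / A = 2 powr (-\<theta>) / Tmin" unfolding A_def by (simp add: powr_minus_divide)
  define x where "x i = log 2 (t i / Tmin) - \<theta>" for i
  have RU: "round_up Tmin \<theta> (t i) = A * 2 powr nx (x i)" if "i < n" for i
    unfolding A_def x_def using RU_eq[OF Tmin, of "t i" \<theta>] t[OF that] Tmin by simp
  have xge: "x i \<ge> -\<theta>" if "i < n" for i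
  proof -
    have "t i / Tmin \<ge> 1" using t[OF that] Tmin by simp
    then have "log 2 (t i / Tmin) \<ge> 0" by simp
    then show ?thesis unfolding x_def by simp
  qed
  have fl1: "\<lfloor>x i\<rfloor> \<ge> -1" if "i < n" for i
    using xge[OF that] th by (simp add: le_floor_iff)
  show ?thesis
  proof (cases "\<theta> \<le> 1 - aa")
    case True
    have T: "\<forall>i<n. \<exists>m::nat. m \<ge> 1 \<and> ((\<lambda>i. round_up Tmin \<theta> (t i)) i = real m * A \<or> (\<lambda>i. round_up Tmin \<theta> (t i)) i = real m * (3/2 * A))"
    proof (intro allI impI)
      fix i assume i: "i < n"
      show "\<exists>m::nat. m \<ge> 1 \<and> ((\<lambda>i. round_up Tmin \<theta> (t i)) i = real m * A \<or> (\<lambda>i. round_up Tmin \<theta> (t i)) i = real m * (3/2 * A))"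
      proof (cases "nx (x i) = real_of_int (\<lfloor>x i\<rfloor> + 1)")
        case c: True
        have "2 powr nx (x i) = real ((2::nat) ^ nat (\<lfloor>x i\<rfloor> + 1))"
          unfolding c using fl1[OF i] by (intro pow2_nat) simp
        then show ?thesis using RU[OF i] by (intro exI[of _ "(2::nat) ^ nat (\<lfloor>x i\<rfloor> + 1)"]) simp
      next
        case c: False
        then have nxe: "nx (x i) = real_of_int \<lfloor>x i\<rfloor> + aa" using nx_grid[of "x i"] by blast
        have "x i < real_of_int \<lfloor>x i\<rfloor> + aa" using nx_gt[of "x i"] nxe by simp
        then have "real_of_int \<lfloor>x i\<rfloor> > -1" using xge[OF i] True by linarith
        then have "(-1::int) < \<lfloor>x i\<rfloor>" by (metis of_int_less_iff of_int_minus of_int_1)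
        then have f0: "\<lfloor>x i\<rfloor> \<ge> 0" by linarith
        have "2 powr nx (x i) = 2 powr real_of_int \<lfloor>x i\<rfloor> * (3/2)" unfolding nxe by (simp add: powr_add pow_aa)
        also have "\<dots> = real ((2::nat) ^ nat \<lfloor>x i\<rfloor>) * (3/2)" using pow2_nat[OF f0] by simp
        finally show ?thesis using RU[OF i] by (intro exI[of _ "(2::nat) ^ nat \<lfloor>x i\<rfloor>"]) simp
      qed
    qed
    have "Jcost n K0 (\<lambda>i. round_up Tmin \<theta> (t i)) \<le> K0 * (1/A + 1/(3/2*A) - 1/(real (3::nat) * A))"
      by (rule Jcost_le[OF K0 A _ _ _ _ T, of 3 2]) (use A in auto)
    also have "\<dots> = K0 * bJ \<theta> / Tmin"
    proof -
      have "1/A + 1/(3/2*A) - 1/(real (3::nat) * A) = 4/3 * (1/A)" using A by (simp add: field_simps)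
      then show ?thesis unfolding invA bJ_def using True by simp
    qed
    finally show ?thesis .
  next
    case False
    have T: "\<forall>i<n. \<exists>m::nat. m \<ge> 1 \<and> ((\<lambda>i. round_up Tmin \<theta> (t i)) i = real m * (3/4 * A) \<or> (\<lambda>i. round_up Tmin \<theta> (t i)) i = real m * A)"
    proof (intro allI impI)
      fix i assume i: "i < n"
      show "\<exists>m::nat. m \<ge> 1 \<and> ((\<lambda>i. round_up Tmin \<theta> (t i)) i = real m * (3/4 * A) \<or> (\<lambda>i. round_up Tmin \<theta> (t i)) i = real m * A)"
      proof (cases "nx (x i) = real_of_int (\<lfloor>x i\<rfloor> + 1)")
        case c: True
        have "2 powr nx (x i) = real ((2::nat) ^ nat (\<lfloor>x i\<rfloor> + 1))"
          unfolding c using fl1[OF i] by (intro pow2_nat) simp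
        then show ?thesis using RU[OF i] by (intro exI[of _ "(2::nat) ^ nat (\<lfloor>x i\<rfloor> + 1)"]) simp
      next
        case c: False
        then have nxe: "nx (x i) = real_of_int \<lfloor>x i\<rfloor> + aa" using nx_grid[of "x i"] by blast
        have f0: "\<lfloor>x i\<rfloor> + 1 \<ge> 0" using fl1[OF i] by simp
        have "2 powr nx (x i) = 2 powr real_of_int (\<lfloor>x i\<rfloor> + 1) * 2 powr (aa - 1)"
          unfolding nxe by (simp add: powr_add[symmetric])
        also have "\<dots> = real ((2::nat) ^ nat (\<lfloor>x i\<rfloor> + 1)) * (3/4)" using pow2_nat[OF f0] pow_aa_m1 by simp
        finally show ?thesis using RU[OF i] by (intro exI[of _ "(2::nat) ^ nat (\<lfloor>x i\<rfloor> + 1)"]) simp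
      qed
    qed
    have "Jcost n K0 (\<lambda>i. round_up Tmin \<theta> (t i)) \<le> K0 * (1/(3/4*A) + 1/A - 1/(real (4::nat) * (3/4*A)))"
      by (rule Jcost_le[OF K0 _ A _ _ _ T, of 4 3]) (use A in auto)
    also have "\<dots> = K0 * bJ \<theta> / Tmin"
    proof -
      have "1/(3/4*A) + 1/A - 1/(real (4::nat) * (3/4*A)) = 2 * (1/A)" using A by (simp add: field_simps)
      then show ?thesis unfolding invA bJ_def using False by simp
    qed
    finally show ?thesis .
  qed
qed



lemma RU_gt: assumes "Tmin > 0" "t > 0" shows "round_up Tmin \<theta> t > t"
proof -
  define x where "x = log 2 (t/Tmin) - \<theta>"
  have t: "t = Tmin * 2 powr (x + \<theta>)" unfolding x_def using assms by simp
  have "x + \<theta> < \<theta> + nx x" using nx_gt[of x] by simp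
  then show ?thesis unfolding round_up_eq[OF assms] x_def[symmetric] using t assms by simp
qed

lemma RU_le: assumes "Tmin > 0" "t > 0" shows "round_up Tmin \<theta> t \<le> 2 * t"
proof -
  define x where "x = log 2 (t/Tmin) - \<theta>"
  have t: "t = Tmin * 2 powr (x + \<theta>)" unfolding x_def using assms by simp
  have "\<theta> + nx x \<le> (x + \<theta>) + 1" using nx_le[of x] by simp
  then have "2 powr (\<theta> + nx x) \<le> 2 powr ((x + \<theta>) + 1)" by simp
  also have "\<dots> = 2 * 2 powr (x + \<theta>)" by (simp add: powr_add)
  finally show ?thesis unfolding round_up_eq[OF assms] x_def[symmetric] using t assms by simp
qed

lemma ln2_le: "ln 2 \<le> (5/6::real)"
proof -
  have "sqrt 2 \<le> sqrt ((17/12)^2)" by (intro real_sqrt_le_mono) (simp add: power2_eq_square)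
  then have s: "sqrt 2 \<le> 17/12" by simp
  have "ln (sqrt 2) \<le> sqrt 2 - 1" by (rule ln_le_minus_one) simp
  moreover have "ln (sqrt 2) = ln 2 / 2" by (rule ln_sqrt) simp
  ultimately show ?thesis using s by simp
qed

theorem lemma4p2:
  fixes n D :: nat and K0 :: real and K H :: "nat \<Rightarrow> real"
    and \<alpha> :: "nat \<Rightarrow> nat \<Rightarrow> real" and Tmin :: real and Tstar :: "nat \<Rightarrow> real"
  assumes "n \<ge> 1" and "D \<ge> 1" and "K0 > 0"
    and "\<And>i. i < n \<Longrightarrow> K i > 0" and "\<And>i. i < n \<Longrightarrow> H i > 0"
    and "\<And>i d. i < n \<Longrightarrow> d < D \<Longrightarrow> \<alpha> i d \<ge> 0"
    and opt: "P_optimal n D K0 K H \<alpha> Tmin Tstar"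
  shows "(AE \<theta> in uniform_measure lborel {0..1::real}.
            resource_feasible n D \<alpha> (\<lambda>i. round_up Tmin \<theta> (Tstar i)))
       \<and> integrable (uniform_measure lborel {0..1::real})
            (\<lambda>\<theta>. Fcost n K0 K H (\<lambda>i. round_up Tmin \<theta> (Tstar i)))
       \<and> (\<integral>\<theta>. Fcost n K0 K H (\<lambda>i. round_up Tmin \<theta> (Tstar i))
              \<partial>uniform_measure lborel {0..1::real})
           \<le> 5 / (6 * ln 2) * OPT_P n D K0 K H \<alpha>"
proof -
  note K0pos = \<open>K0 > 0\<close> and Kp = \<open>\<And>i. i < n \<Longrightarrow> K i > 0\<close> and Hp = \<open>\<And>i. i < n \<Longrightarrow> H i > 0\<close>
    and \<alpha>0 = \<open>\<And>i d. i < n \<Longrightarrow> d < D \<Longrightarrow> \<alpha> i d \<ge> 0\<close>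
  have feas: "P_feasible n D \<alpha> Tmin Tstar" using opt unfolding P_optimal_def by simp
  have Tmin: "Tmin > 0" and Tge: "\<And>i. i < n \<Longrightarrow> Tmin \<le> Tstar i"
    and res: "\<And>d. d < D \<Longrightarrow> (\<Sum>i<n. \<alpha> i d / Tstar i) \<le> 1"
    using feas unfolding P_feasible_def by auto
  have tpos: "\<And>i. i < n \<Longrightarrow> Tstar i > 0" using Tge Tmin by (meson less_le_trans)
  define R where "R \<theta> i = round_up Tmin \<theta> (Tstar i)" for \<theta> i
  have Rgt: "R \<theta> i > Tstar i" if "i < n" for \<theta> i unfolding R_def by (rule RU_gt[OF Tmin tpos[OF that]])
  have Rle: "R \<theta> i \<le> 2 * Tstar i" if "i < n" for \<theta> i unfolding R_def by (rule RU_le[OF Tmin tpos[OF that]])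
  have Rpos: "R \<theta> i > 0" if "i < n" for \<theta> i using Rgt[OF that, of \<theta>] tpos[OF that] by linarith

  have P1: "AE \<theta> in uniform_measure lborel {0..1::real}. resource_feasible n D \<alpha> (\<lambda>i. round_up Tmin \<theta> (Tstar i))"
  proof (rule AE_I2)
    fix \<theta> :: real
    have "(\<Sum>i<n. \<alpha> i d / R \<theta> i) \<le> 1" if d: "d < D" for d
    proof -
      have "(\<Sum>i<n. \<alpha> i d / R \<theta> i) \<le> (\<Sum>i<n. \<alpha> i d / Tstar i)"
      proof (rule sum_mono)
        fix i assume "i \<in> {..<n}"
        then have i: "i < n" by simp
        show "\<alpha> i d / R \<theta> i \<le> \<alpha> i d / Tstar i"
          using \<alpha>0[OF i d] Rgt[OF i, of \<theta>] tpos[OF i] by (intro divide_left_mono) auto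
      qed
      also have "\<dots> \<le> 1" by (rule res[OF d])
      finally show ?thesis .
    qed
    then show "resource_feasible n D \<alpha> (\<lambda>i. round_up Tmin \<theta> (Tstar i))"
      unfolding resource_feasible_def using Rpos unfolding R_def by auto
  qed

  define f where "f \<theta> = Fcost n K0 K H (\<lambda>i. round_up Tmin \<theta> (Tstar i))" for \<theta>
  have fm: "f \<in> borel_measurable borel" unfolding f_def by (rule Fcost_meas[OF Tmin tpos])
  define u where "u i = log 2 (Tstar i / Tmin)" for i
  define G where "G \<theta> = K0 * bJ \<theta> / Tmin + (\<Sum>i<n. K i / Tstar i + H i * (Tmin * 2 powr (\<theta> + nx (u i - \<theta>))))" for \<theta>
  define B where "B = K0 * 2 / Tmin + (\<Sum>i<n. K i / Tstar i + H i * (2 * Tstar i))"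
  have fle: "f \<theta> \<le> G \<theta>" and f0: "0 \<le> f \<theta>" and fB: "f \<theta> \<le> B" if th: "\<theta> \<in> {0..1}" for \<theta>
  proof -
    have J: "Jcost n K0 (\<lambda>i. round_up Tmin \<theta> (Tstar i)) \<le> K0 * bJ \<theta> / Tmin"
      by (rule J_bound[OF Tmin Tge less_imp_le[OF K0pos] th])
    have J0: "Jcost n K0 (\<lambda>i. round_up Tmin \<theta> (Tstar i)) \<ge> 0" by (rule Jcost_nonneg[OF less_imp_le[OF K0pos]])
    have bJ2: "bJ \<theta> \<le> 2"
    proof -
      have "2 powr (-\<theta>) \<le> 2 powr 0" using th by (intro powr_mono) auto
      then have "2 powr (-\<theta>) \<le> 1" by simp
      moreover have "2 powr (-\<theta>) \<ge> 0" by simp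
      ultimately show ?thesis unfolding bJ_def by (auto simp: mult_le_one)
    qed
    have S1: "(\<Sum>i<n. K i / R \<theta> i + H i * R \<theta> i) \<le> (\<Sum>i<n. K i / Tstar i + H i * (Tmin * 2 powr (\<theta> + nx (u i - \<theta>))))"
    proof (rule sum_mono)
      fix i assume "i \<in> {..<n}"
      then have i: "i < n" by simp
      have "K i / R \<theta> i \<le> K i / Tstar i"
        using Kp[OF i] Rgt[OF i, of \<theta>] tpos[OF i] by (intro divide_left_mono) auto
      moreover have "R \<theta> i = Tmin * 2 powr (\<theta> + nx (u i - \<theta>))"
        unfolding R_def u_def by (rule round_up_eq[OF Tmin tpos[OF i]])
      ultimately show "K i / R \<theta> i + H i * R \<theta> i \<le> K i / Tstar i + H i * (Tmin * 2 powr (\<theta> + nx (u i - \<theta>)))"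
        by simp
    qed
    have S2: "(\<Sum>i<n. K i / R \<theta> i + H i * R \<theta> i) \<le> (\<Sum>i<n. K i / Tstar i + H i * (2 * Tstar i))"
    proof (rule sum_mono)
      fix i assume "i \<in> {..<n}"
      then have i: "i < n" by simp
      have "K i / R \<theta> i \<le> K i / Tstar i"
        using Kp[OF i] Rgt[OF i, of \<theta>] tpos[OF i] by (intro divide_left_mono) auto
      moreover have "H i * R \<theta> i \<le> H i * (2 * Tstar i)" using Hp[OF i] Rle[OF i, of \<theta>] by simp
      ultimately show "K i / R \<theta> i + H i * R \<theta> i \<le> K i / Tstar i + H i * (2 * Tstar i)" by simp
    qed
    have S0: "0 \<le> (\<Sum>i<n. K i / R \<theta> i + H i * R \<theta> i)"
    proof (rule sum_nonneg)
      fix i assume "i \<in> {..<n}"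
      then have i: "i < n" by simp
      show "0 \<le> K i / R \<theta> i + H i * R \<theta> i" using Kp[OF i] Hp[OF i] Rpos[OF i, of \<theta>] by simp
    qed
    have fe: "f \<theta> = Jcost n K0 (\<lambda>i. round_up Tmin \<theta> (Tstar i)) + (\<Sum>i<n. K i / R \<theta> i + H i * R \<theta> i)"
      unfolding f_def Fcost_def R_def ..
    show "f \<theta> \<le> G \<theta>" unfolding fe G_def using J S1 by simp
    show "0 \<le> f \<theta>" unfolding fe using J0 S0 by simp
    have "K0 * bJ \<theta> / Tmin \<le> K0 * 2 / Tmin" using bJ2 K0pos Tmin by (simp add: divide_right_mono)
    then show "f \<theta> \<le> B" unfolding fe B_def using J S2 by simp
  qed
  have fabs: "\<bar>f \<theta>\<bar> \<le> B" if "\<theta> \<in> {0..1}" for \<theta> using f0[OF that] fB[OF that] by simp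
  note UL = U_lemma[OF fm fabs]
  have P2: "integrable (uniform_measure lborel {0..1::real}) (\<lambda>\<theta>. Fcost n K0 K H (\<lambda>i. round_up Tmin \<theta> (Tstar i)))"
    using UL(1) unfolding f_def .

  define c :: real where "c = 5 / (6 * ln 2)"
  have c1: "c \<ge> 1" unfolding c_def using ln2_le by (simp add: field_simps)
  define V where "V = K0 * ((5/6) / ln 2) / Tmin + (\<Sum>i<n. K i / Tstar i + H i * (Tmin * (2 powr u i * (5/6) / ln 2)))"
  have GI: "(G has_integral V) {0..1}"
  proof -
    have a: "((\<lambda>\<theta>. K0 * bJ \<theta> / Tmin) has_integral K0 * ((5/6) / ln 2) / Tmin) {0..1}"
      by (intro has_integral_divide has_integral_mult_right int_bJ)
    have b: "((\<lambda>\<theta>. \<Sum>i<n. K i / Tstar i + H i * (Tmin * 2 powr (\<theta> + nx (u i - \<theta>)))) has_integral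
        (\<Sum>i<n. K i / Tstar i + H i * (Tmin * (2 powr u i * (5/6) / ln 2)))) {0..1}"
    proof (rule has_integral_sum)
      fix i assume "i \<in> {..<n}"
      have "((\<lambda>\<theta>::real. K i / Tstar i) has_integral K i / Tstar i) {0..1}"
        using has_integral_const_real[of "K i / Tstar i" 0 1] by simp
      moreover have "((\<lambda>\<theta>. H i * (Tmin * 2 powr (\<theta> + nx (u i - \<theta>)))) has_integral H i * (Tmin * (2 powr u i * (5/6) / ln 2))) {0..1}"
        by (intro has_integral_mult_right int_up)
      ultimately show "((\<lambda>\<theta>. K i / Tstar i + H i * (Tmin * 2 powr (\<theta> + nx (u i - \<theta>)))) has_integral
          K i / Tstar i + H i * (Tmin * (2 powr u i * (5/6) / ln 2))) {0..1}"
        by (rule has_integral_add)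
    qed simp
    show ?thesis unfolding G_def V_def using has_integral_add[OF a b] .
  qed
  have intf: "integral {0..1} f \<le> V"
    by (rule has_integral_le[OF integrable_integral[OF UL(2)] GI fle])
  have OPT: "OPT_P n D K0 K H \<alpha> = P_obj n K0 K H Tmin Tstar"
    unfolding OPT_P_def
  proof (rule cInf_eq_minimum)
    show "P_obj n K0 K H Tmin Tstar \<in> {P_obj n K0 K H Tmin T |Tmin T. P_feasible n D \<alpha> Tmin T}"
      using feas by blast
    fix x assume "x \<in> {P_obj n K0 K H Tmin T |Tmin T. P_feasible n D \<alpha> Tmin T}"
    then show "P_obj n K0 K H Tmin Tstar \<le> x" using opt unfolding P_optimal_def by auto
  qed
  have VP: "V \<le> c * P_obj n K0 K H Tmin Tstar"
  proof -
    have "V = c * (K0 / Tmin) + (\<Sum>i<n. K i / Tstar i + c * (H i * Tstar i))"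
    proof -
      have "Tmin * (2 powr u i * (5/6) / ln 2) = c * Tstar i" if "i < n" for i
        unfolding u_def c_def using Tmin tpos[OF that] by simp
      then have "(\<Sum>i<n. K i / Tstar i + H i * (Tmin * (2 powr u i * (5/6) / ln 2))) = (\<Sum>i<n. K i / Tstar i + c * (H i * Tstar i))"
        by (intro sum.cong) auto
      moreover have "K0 * ((5/6) / ln 2) / Tmin = c * (K0 / Tmin)" unfolding c_def by simp
      ultimately show ?thesis unfolding V_def by simp
    qed
    also have "\<dots> \<le> c * (K0 / Tmin) + (\<Sum>i<n. c * (K i / Tstar i + H i * Tstar i))"
    proof (intro add_left_mono sum_mono)
      fix i assume "i \<in> {..<n}"
      then have i: "i < n" by simp
      have x0: "0 \<le> K i / Tstar i" using Kp[OF i] tpos[OF i] by simp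
      have "K i / Tstar i \<le> c * (K i / Tstar i)" using mult_right_mono[OF c1 x0] by simp
      then show "K i / Tstar i + c * (H i * Tstar i) \<le> c * (K i / Tstar i + H i * Tstar i)"
        by (simp add: distrib_left)
    qed
    also have "\<dots> = c * P_obj n K0 K H Tmin Tstar" unfolding P_obj_def by (simp add: distrib_left sum_distrib_left)
    finally show ?thesis .
  qed
  have P3: "(\<integral>\<theta>. Fcost n K0 K H (\<lambda>i. round_up Tmin \<theta> (Tstar i)) \<partial>uniform_measure lborel {0..1::real})
           \<le> 5 / (6 * ln 2) * OPT_P n D K0 K H \<alpha>"
    using UL(3) intf VP unfolding f_def OPT c_def by simp
  show ?thesis using P1 P2 P3 by blast
qed


end
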